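(* For every index coding instance $\mathcal{I}=\{(i\mid A_i):i\in[m]\}$, the optimal value $\beta_{\text{FPCC}}(\mathcal{I})$ is attained by a family $(M_j,\gamma_j)_{j\in[n]}$ in which every $M_j$ is a minimal partial clique set; equivalently, restricting the FPCC optimization to families of minimal partial clique sets does not change its value.
   Context: $\beta_{\text{MDS}}(M)=|M|-\min_{i\in M}|M\cap A_i|$ for nonempty $M\subseteq[m]$. $\beta_{\text{FPCC}}(\mathcal{I})=\min\sum_{j\in[n]}\gamma_j\beta_{\text{MDS}}(M_j)$ over finite families of nonempty (possibly overlapping) subsets $M_1,\dots,M_n\subseteq[m]$ and weights $\gamma_j\in[0,1]$ with $\sum_{j:\,i\in M_j}\gamma_j\ge1$ for every $i\in[m]$. A nonempty set $M\subseteq[m]$ is a minimal partial clique set if for every partition of $M$ into nonempty disjoint subsets $M_1,\dots,M_n$ one has $\beta_{\text{MDS}}(M)\le\sum_{j}\beta_{\text{MDS}}(M_j)$. *)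

theory Defs
  imports Complex_Main "HOL-Library.Disjoint_Sets"
begin

definition index_coding_instance :: "nat \<Rightarrow> (nat \<Rightarrow> nat set) \<Rightarrow> bool" where
  "index_coding_instance m A \<longleftrightarrow> (\<forall>i\<in>{1..m}. A i \<subseteq> {1..m} - {i})"

definition beta_MDS :: "(nat \<Rightarrow> nat set) \<Rightarrow> nat set \<Rightarrow> real" where
  "beta_MDS A M = real (card M) - real (Min ((\<lambda>i. card (M \<inter> A i)) ` M))"

definition fpcc_feasible ::
  "nat \<Rightarrow> nat \<Rightarrow> (nat \<Rightarrow> nat set) \<Rightarrow> (nat \<Rightarrow> real) \<Rightarrow> bool" where
  "fpcc_feasible m n Ms \<gamma> \<longleftrightarrow>
     (\<forall>j<n. Ms j \<noteq> {} \<and> Ms j \<subseteq> {1..m} \<and> 0 \<le> \<gamma> j \<and> \<gamma> j \<le> 1) \<and>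
     (\<forall>i\<in>{1..m}. (\<Sum>j\<in>{j. j < n \<and> i \<in> Ms j}. \<gamma> j) \<ge> 1)"

definition fpcc_cost ::
  "(nat \<Rightarrow> nat set) \<Rightarrow> nat \<Rightarrow> (nat \<Rightarrow> nat set) \<Rightarrow> (nat \<Rightarrow> real) \<Rightarrow> real" where
  "fpcc_cost A n Ms \<gamma> = (\<Sum>j<n. \<gamma> j * beta_MDS A (Ms j))"

definition beta_FPCC :: "nat \<Rightarrow> (nat \<Rightarrow> nat set) \<Rightarrow> real" where
  "beta_FPCC m A = Inf {fpcc_cost A n Ms \<gamma> | n Ms \<gamma>. fpcc_feasible m n Ms \<gamma>}"

definition minimal_partial_clique_set :: "nat \<Rightarrow> (nat \<Rightarrow> nat set) \<Rightarrow> nat set \<Rightarrow> bool" where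
  "minimal_partial_clique_set m A M \<longleftrightarrow> M \<noteq> {} \<and> M \<subseteq> {1..m} \<and>
     (\<forall>P. partition_on M P \<longrightarrow> beta_MDS A M \<le> (\<Sum>B\<in>P. beta_MDS A B))"

end

theory Submission
  imports Defs "HOL-Analysis.Analysis"
begin


lemma beta_nonneg:
  assumes "finite M" "M \<noteq> {}"
  shows "0 \<le> beta_MDS A M"
proof -
  obtain i where i: "i \<in> M" using assms by blast
  have "Min ((\<lambda>i. card (M \<inter> A i)) ` M) \<le> card (M \<inter> A i)"
    using assms i by (intro Min_le) auto
  also have "\<dots> \<le> card M" using assms by (intro card_mono) auto
  finally show ?thesis unfolding beta_MDS_def by simp
qed

lemma singleton_minimal:
  assumes "i \<in> {1..m}"
  shows "minimal_partial_clique_set m A {i}"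
proof -
  have "P = {{i}}" if "partition_on {i} P" for P
  proof -
    have u: "\<Union>P = {i}" and e: "{} \<notin> P" using that by (auto simp: partition_on_def)
    have sub: "P \<subseteq> {{i}}"
    proof
      fix B assume "B \<in> P"
      then have "B \<subseteq> {i}" "B \<noteq> {}" using u e by auto
      then show "B \<in> {{i}}" by (simp add: subset_singleton_iff)
    qed
    moreover have "P \<noteq> {}" using u by auto
    ultimately show ?thesis by (simp add: subset_singleton_iff)
  qed
  then have "\<forall>P. partition_on {i} P \<longrightarrow> beta_MDS A {i} \<le> (\<Sum>B\<in>P. beta_MDS A B)"
  proof (intro allI impI)
    fix P assume "partition_on {i} P"
    then have "P = {{i}}" by fact
    then show "beta_MDS A {i} \<le> (\<Sum>B\<in>P. beta_MDS A B)" by simp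
  qed
  then show ?thesis using assms unfolding minimal_partial_clique_set_def by simp
qed

lemma partition_replace:
  assumes "partition_on M P" "B \<in> P" "partition_on B Q"
  shows "partition_on M ((P - {B}) \<union> Q)"
proof -
  have u1: "\<Union>P = M" and d1: "\<And>X Y. X \<in> P \<Longrightarrow> Y \<in> P \<Longrightarrow> X \<noteq> Y \<Longrightarrow> X \<inter> Y = {}"
    and e1: "{} \<notin> P" using assms(1) unfolding partition_on_def disjoint_def disjnt_def by auto
  have u2: "\<Union>Q = B" and d2: "\<And>X Y. X \<in> Q \<Longrightarrow> Y \<in> Q \<Longrightarrow> X \<noteq> Y \<Longrightarrow> X \<inter> Y = {}"
    and e2: "{} \<notin> Q" using assms(3) unfolding partition_on_def disjoint_def disjnt_def by auto
  have "\<Union>((P - {B}) \<union> Q) = M" using u1 u2 assms(2) by blast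
  moreover have "X \<inter> Y = {}" if "X \<in> (P - {B}) \<union> Q" "Y \<in> (P - {B}) \<union> Q" "X \<noteq> Y" for X Y
  proof -
    have sub: "Z \<subseteq> B" if "Z \<in> Q" for Z using u2 that by blast
    have dB: "Z \<inter> B = {}" if "Z \<in> P - {B}" for Z using d1[of Z B] that assms(2) by blast
    show ?thesis
    proof (cases "X \<in> Q")
      case xq: True
      show ?thesis
      proof (cases "Y \<in> Q")
        case True then show ?thesis using d2 xq that(3) by blast
      next
        case False then have "Y \<in> P - {B}" using that(2) by simp
        then show ?thesis using sub[OF xq] dB[of Y] by blast
      qed
    next
      case xq: False
      then have xp: "X \<in> P - {B}" using that(1) by simp
      show ?thesis
      proof (cases "Y \<in> Q")
        case True then show ?thesis using sub[of Y] dB[OF xp] by blast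
      next
        case False then have "Y \<in> P - {B}" using that(2) by simp
        then show ?thesis using d1 xp that(3) by blast
      qed
    qed
  qed
  moreover have "{} \<notin> (P - {B}) \<union> Q" using e1 e2 by blast
  ultimately show ?thesis by (intro partition_onI) (auto simp: disjnt_def)
qed


lemma opt_partition:
  assumes "M \<noteq> {}" "M \<subseteq> {1..m}"
  shows "\<exists>P. partition_on M P \<and> (\<forall>B\<in>P. minimal_partial_clique_set m A B) \<and>
             (\<Sum>B\<in>P. beta_MDS A B) \<le> beta_MDS A M"
proof -
  define f where "f = (\<lambda>P. \<Sum>B\<in>P. beta_MDS A B)"
  define Parts where "Parts = {P. partition_on M P}"
  have finM: "finite M" using assms(2) finite_subset by blast
  have fin: "finite Parts" unfolding Parts_def using finitely_many_partition_on[OF finM] .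
  have MP: "{M} \<in> Parts" unfolding Parts_def using partition_on_space[OF assms(1)] by simp
  define v where "v = Min (f ` Parts)"
  have "v \<in> f ` Parts" unfolding v_def using fin MP by (intro Min_in) auto
  then obtain P where P: "P \<in> Parts" "f P = v" by auto
  have Pmin: "f P \<le> f Q" if "Q \<in> Parts" for Q
    using P(2) fin that unfolding v_def by (metis Min_le finite_imageI image_eqI)
  have Ppart: "partition_on M P" using P(1) unfolding Parts_def by simp
  have finP: "finite P" using finite_elements[OF finM Ppart] .
  have "f P \<le> beta_MDS A M" using Pmin[OF MP] unfolding f_def by simp
  moreover have "minimal_partial_clique_set m A B" if B: "B \<in> P" for B
  proof -
    have Bne: "B \<noteq> {}" using partition_onD3[OF Ppart] B by auto
    have BM: "B \<subseteq> M" using partition_onD1[OF Ppart] B by auto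
    have "beta_MDS A B \<le> (\<Sum>C\<in>Q. beta_MDS A C)" if Q: "partition_on B Q" for Q
    proof (rule ccontr)
      assume neg: "\<not> ?thesis"
      have finB: "finite B" using finM BM finite_subset by blast
      have finQ: "finite Q" using finite_elements[OF finB Q] .
      have P'part: "partition_on M ((P - {B}) \<union> Q)" using partition_replace[OF Ppart B Q] .
      have disj: "(P - {B}) \<inter> Q = {}"
      proof (rule ccontr)
        assume "(P - {B}) \<inter> Q \<noteq> {}"
        then obtain Z where Z: "Z \<in> P" "Z \<noteq> B" "Z \<in> Q" by blast
        have "Z \<subseteq> B" using partition_onD1[OF Q] Z(3) by auto
        moreover have "Z \<inter> B = {}" using disjointD[OF partition_onD2[OF Ppart] Z(1) B Z(2)] .
        moreover have "Z \<noteq> {}" using partition_onD3[OF Q] Z(3) by auto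
        ultimately show False by blast
      qed
      have "f ((P - {B}) \<union> Q) = f (P - {B}) + f Q"
        unfolding f_def using finP finQ disj by (intro sum.union_disjoint) auto
      moreover have "f P = f (P - {B}) + beta_MDS A B"
        unfolding f_def using finP B by (simp add: sum.remove)
      moreover have "f Q < beta_MDS A B" using neg unfolding f_def by simp
      moreover have "f P \<le> f ((P - {B}) \<union> Q)" using Pmin P'part unfolding Parts_def by simp
      ultimately show False by linarith
    qed
    then have "\<forall>Q. partition_on B Q \<longrightarrow> beta_MDS A B \<le> (\<Sum>C\<in>Q. beta_MDS A C)" by blast
    moreover have "B \<subseteq> {1..m}" using BM assms(2) by (rule order_trans)
    ultimately show ?thesis unfolding minimal_partial_clique_set_def using Bne by simp
  qed
  ultimately show ?thesis using Ppart unfolding f_def by (intro exI[of _ P]) simp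
qed


lemma lp_min:
  fixes I :: "nat set set" and b :: "nat set \<Rightarrow> real" and C :: "nat set"
  assumes "finite I"
  defines "K \<equiv> {w::nat set \<Rightarrow> real. (\<forall>S. w S \<in> (if S \<in> I then {0..1} else {0})) \<and>
                 (\<forall>i\<in>C. 1 \<le> (\<Sum>S\<in>{S\<in>I. i\<in>S}. w S))}"
  assumes "K \<noteq> {}"
  shows "\<exists>w\<in>K. \<forall>w'\<in>K. (\<Sum>S\<in>I. w S * b S) \<le> (\<Sum>S\<in>I. w' S * b S)"
proof -
  define F where "F = (\<lambda>S::nat set. if S \<in> I then {0..1::real} else {0})"
  have cF: "compact (PiE UNIV F)"
  proof -
    have "compactin (product_topology (\<lambda>_. euclidean) UNIV) (PiE UNIV F)"
      by (subst compactin_PiE) (auto simp: F_def)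
    then show ?thesis by (simp add: euclidean_product_topology)
  qed
  have cl: "closed (\<Inter>i\<in>C. {w::nat set \<Rightarrow> real. (\<lambda>_. 1) w \<le> (\<Sum>S\<in>{S\<in>I. i\<in>S}. w S)})"
    by (intro closed_INT ballI closed_Collect_le continuous_intros continuous_on_product_coordinates)
  have KK: "K = PiE UNIV F \<inter> (\<Inter>i\<in>C. {w::nat set \<Rightarrow> real. (\<lambda>_. 1) w \<le> (\<Sum>S\<in>{S\<in>I. i\<in>S}. w S)})"
    unfolding K_def F_def by (auto simp: PiE_iff) (metis atLeastAtMost_iff singletonD)+
  have "compact K" unfolding KK using cF cl by (rule compact_Int_closed)
  moreover have "continuous_on K (\<lambda>w. \<Sum>S\<in>I. w S * b S)"
    by (intro continuous_intros continuous_on_subset[OF continuous_on_product_coordinates]) auto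
  ultimately show ?thesis using continuous_attains_inf assms(3) by blast
qed


lemma lower:
  assumes I: "I = {M. minimal_partial_clique_set m A M}"
    and feas: "fpcc_feasible m n Ms \<gamma>"
  shows "\<exists>w. (\<forall>S. w S \<in> (if S \<in> I then {0..1} else {0})) \<and>
             (\<forall>i\<in>{1..m}. 1 \<le> (\<Sum>S\<in>{S\<in>I. i\<in>S}. w S)) \<and>
             (\<Sum>S\<in>I. w S * beta_MDS A S) \<le> fpcc_cost A n Ms \<gamma>"
proof -
  have F1: "\<And>j. j < n \<Longrightarrow> Ms j \<noteq> {} \<and> Ms j \<subseteq> {1..m} \<and> 0 \<le> \<gamma> j \<and> \<gamma> j \<le> 1"
    and F2: "\<And>i. i \<in> {1..m} \<Longrightarrow> (\<Sum>j\<in>{j. j < n \<and> i \<in> Ms j}. \<gamma> j) \<ge> 1"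
    using feas unfolding fpcc_feasible_def by auto
  have finI: "finite I"
    by (rule finite_subset[of _ "Pow {1..m}"]) (auto simp: I minimal_partial_clique_set_def)
  have "\<forall>j. j < n \<longrightarrow> (\<exists>P. partition_on (Ms j) P \<and> (\<forall>B\<in>P. minimal_partial_clique_set m A B) \<and>
             (\<Sum>B\<in>P. beta_MDS A B) \<le> beta_MDS A (Ms j))"
  proof (intro allI impI)
    fix j assume "j < n"
    then show "\<exists>P. partition_on (Ms j) P \<and> (\<forall>B\<in>P. minimal_partial_clique_set m A B) \<and>
             (\<Sum>B\<in>P. beta_MDS A B) \<le> beta_MDS A (Ms j)"
      using opt_partition[of "Ms j" m A] F1 by simp
  qed
  then obtain P where P: "\<And>j. j < n \<Longrightarrow> partition_on (Ms j) (P j) \<and> (\<forall>B\<in>P j. minimal_partial_clique_set m A B) \<and>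
             (\<Sum>B\<in>P j. beta_MDS A B) \<le> beta_MDS A (Ms j)"
    by (metis (no_types))
  have PI: "P j \<subseteq> I" if "j < n" for j using P[OF that] I by auto
  define g where "g S = (\<Sum>j<n. if S \<in> P j then \<gamma> j else 0)" for S
  define w where "w S = (if S \<in> I then min 1 (g S) else 0)" for S
  have g0: "0 \<le> g S" for S unfolding g_def using F1 by (intro sum_nonneg) auto
  have w0: "0 \<le> w S" for S unfolding w_def using g0 by auto
  have range: "\<forall>S. w S \<in> (if S \<in> I then {0..1} else {0})"
    unfolding w_def using g0 by auto
  have betann: "0 \<le> beta_MDS A S" if "S \<in> I" for S
  proof -
    have "S \<noteq> {}" "S \<subseteq> {1..m}" using that I by (auto simp: minimal_partial_clique_set_def)
    then show ?thesis using beta_nonneg finite_subset by blast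
  qed
  have cover: "1 \<le> (\<Sum>S\<in>{S\<in>I. i\<in>S}. w S)" if i: "i \<in> {1..m}" for i
  proof (cases "\<exists>S\<in>I. i \<in> S \<and> 1 \<le> g S")
    case True
    then obtain S where S: "S \<in> I" "i \<in> S" "1 \<le> g S" by blast
    have "w S = 1" using S unfolding w_def by auto
    moreover have "w S \<le> (\<Sum>S\<in>{S\<in>I. i\<in>S}. w S)"
      using S finI w0 by (intro member_le_sum) auto
    ultimately show ?thesis by simp
  next
    case False
    then have eq: "w S = g S" if "S \<in> {S\<in>I. i\<in>S}" for S using that unfolding w_def by auto
    have inner: "(\<Sum>S\<in>{S\<in>I. i\<in>S}. if S \<in> P j then \<gamma> j else 0) = (if i \<in> Ms j then \<gamma> j else 0)"
      if j: "j < n" for j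
    proof -
      have pj: "partition_on (Ms j) (P j)" using P[OF j] by blast
      have "(\<Sum>S\<in>{S\<in>I. i\<in>S}. if S \<in> P j then \<gamma> j else 0) = (\<Sum>S\<in>{S\<in>{S\<in>I. i\<in>S}. S \<in> P j}. \<gamma> j)"
        using finI by (subst sum.inter_filter) auto
      also have "\<dots> = (if i \<in> Ms j then \<gamma> j else 0)"
      proof (cases "i \<in> Ms j")
        case True
        then obtain S0 where S0: "S0 \<in> P j" "i \<in> S0" using partition_onD1[OF pj] by auto
        have "{S\<in>{S\<in>I. i\<in>S}. S \<in> P j} = {S0}"
        proof (rule set_eqI, rule iffI)
          fix S assume "S \<in> {S\<in>{S\<in>I. i\<in>S}. S \<in> P j}"
          then have "S \<in> P j" "i \<in> S" by auto
          then show "S \<in> {S0}" using disjointD[OF partition_onD2[OF pj] _ S0(1)] S0(2) by blast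
        next
          fix S assume "S \<in> {S0}"
          then show "S \<in> {S\<in>{S\<in>I. i\<in>S}. S \<in> P j}" using S0 PI[OF j] by auto
        qed
        then show ?thesis using True by simp
      next
        case False
        have "{S\<in>{S\<in>I. i\<in>S}. S \<in> P j} = {}"
          using False partition_onD1[OF pj] by auto
        then show ?thesis using False by (simp only: sum.empty if_False)
      qed
      finally show ?thesis .
    qed
    have "(\<Sum>S\<in>{S\<in>I. i\<in>S}. w S) = (\<Sum>S\<in>{S\<in>I. i\<in>S}. g S)"
      using eq by (rule sum.cong[OF refl])
    also have "\<dots> = (\<Sum>j<n. \<Sum>S\<in>{S\<in>I. i\<in>S}. if S \<in> P j then \<gamma> j else 0)"
      unfolding g_def by (rule sum.swap)
    also have "\<dots> = (\<Sum>j<n. if i \<in> Ms j then \<gamma> j else 0)"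
      using inner by (intro sum.cong) auto
    also have "\<dots> = (\<Sum>j\<in>{j. j < n \<and> i \<in> Ms j}. \<gamma> j)"
    proof -
      have "{j. j < n \<and> i \<in> Ms j} = {j\<in>{..<n}. i \<in> Ms j}" by auto
      then show ?thesis using sum.inter_filter[of "{..<n}" \<gamma> "\<lambda>j. i \<in> Ms j"] by simp
    qed
    finally show ?thesis using F2[OF i] by simp
  qed
  have "(\<Sum>S\<in>I. w S * beta_MDS A S) \<le> (\<Sum>S\<in>I. g S * beta_MDS A S)"
  proof (rule sum_mono)
    fix S assume S: "S \<in> I"
    have "w S \<le> g S" unfolding w_def using S by simp
    then show "w S * beta_MDS A S \<le> g S * beta_MDS A S" using betann[OF S] by (rule mult_right_mono)
  qed
  also have "\<dots> = (\<Sum>S\<in>I. \<Sum>j<n. if S \<in> P j then \<gamma> j * beta_MDS A S else 0)"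
    unfolding g_def sum_distrib_right by (intro sum.cong refl) simp
  also have "\<dots> = (\<Sum>j<n. \<Sum>S\<in>I. if S \<in> P j then \<gamma> j * beta_MDS A S else 0)"
    by (rule sum.swap)
  also have "\<dots> = (\<Sum>j<n. \<gamma> j * (\<Sum>S\<in>P j. beta_MDS A S))"
  proof (intro sum.cong refl)
    fix j assume "j \<in> {..<n}"
    then have "P j \<subseteq> I" using PI by auto
    then have "{S\<in>I. S \<in> P j} = P j" by auto
    moreover have "(\<Sum>S\<in>I. if S \<in> P j then \<gamma> j * beta_MDS A S else 0) = (\<Sum>S\<in>{S\<in>I. S \<in> P j}. \<gamma> j * beta_MDS A S)"
      by (rule sum.inter_filter[OF finI, symmetric])
    ultimately have "(\<Sum>S\<in>I. if S \<in> P j then \<gamma> j * beta_MDS A S else 0) = (\<Sum>S\<in>P j. \<gamma> j * beta_MDS A S)"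
      by (simp only:)
    then show "(\<Sum>S\<in>I. if S \<in> P j then \<gamma> j * beta_MDS A S else 0) = \<gamma> j * (\<Sum>S\<in>P j. beta_MDS A S)"
      by (simp add: sum_distrib_left)
  qed
  also have "\<dots> \<le> (\<Sum>j<n. \<gamma> j * beta_MDS A (Ms j))"
  proof (rule sum_mono)
    fix j assume "j \<in> {..<n}"
    then have j: "j < n" by simp
    show "\<gamma> j * (\<Sum>S\<in>P j. beta_MDS A S) \<le> \<gamma> j * beta_MDS A (Ms j)"
      using P[OF j] F1[OF j] by (intro mult_left_mono) auto
  qed
  also have "\<dots> = fpcc_cost A n Ms \<gamma>" unfolding fpcc_cost_def ..
  finally have "(\<Sum>S\<in>I. w S * beta_MDS A S) \<le> fpcc_cost A n Ms \<gamma>" .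
  with range cover show ?thesis by (intro exI[of _ w]) simp
qed

theorem proposition16:
  fixes m :: nat and A :: "nat \<Rightarrow> nat set"
  assumes "index_coding_instance m A"
  shows "\<exists>n Ms \<gamma>. fpcc_feasible m n Ms \<gamma> \<and>
           (\<forall>j<n. minimal_partial_clique_set m A (Ms j)) \<and>
           fpcc_cost A n Ms \<gamma> = beta_FPCC m A \<and>
           (\<forall>n' Ms' \<gamma>'. fpcc_feasible m n' Ms' \<gamma>' \<longrightarrow> fpcc_cost A n Ms \<gamma> \<le> fpcc_cost A n' Ms' \<gamma>')"
proof -
  define I where "I = {M. minimal_partial_clique_set m A M}"
  define K where "K = {w::nat set \<Rightarrow> real. (\<forall>S. w S \<in> (if S \<in> I then {0..1} else {0})) \<and>
                 (\<forall>i\<in>{1..m}. 1 \<le> (\<Sum>S\<in>{S\<in>I. i\<in>S}. w S))}"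
  define c where "c w = (\<Sum>S\<in>I. w S * beta_MDS A S)" for w :: "nat set \<Rightarrow> real"
  have finI: "finite I"
    by (rule finite_subset[of _ "Pow {1..m}"]) (auto simp: I_def minimal_partial_clique_set_def)
  define w1 where "w1 S = (if S \<in> I \<and> card S = 1 then 1 else 0 :: real)" for S
  have "w1 \<in> K"
  proof -
    have "\<forall>S. w1 S \<in> (if S \<in> I then {0..1} else {0})" unfolding w1_def by auto
    moreover have "1 \<le> (\<Sum>S\<in>{S\<in>I. i\<in>S}. w1 S)" if i: "i \<in> {1..m}" for i
    proof -
      have iI: "{i} \<in> I" unfolding I_def using singleton_minimal[OF i] by simp
      have "w1 {i} \<le> (\<Sum>S\<in>{S\<in>I. i\<in>S}. w1 S)"
        using iI finI by (intro member_le_sum) (auto simp: w1_def)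
      moreover have "w1 {i} = 1" using iI unfolding w1_def by simp
      ultimately show ?thesis by simp
    qed
    ultimately show ?thesis unfolding K_def by blast
  qed
  then have "K \<noteq> {}" by blast
  from lp_min[OF finI, of "{1..m}", folded K_def, OF this]
  obtain w0 where w0K: "w0 \<in> K" and w0min: "\<And>w'. w' \<in> K \<Longrightarrow> c w0 \<le> c w'"
    unfolding c_def by blast
  have w0r: "\<And>S. w0 S \<in> (if S \<in> I then {0..1} else {0})"
    and w0c: "\<And>i. i \<in> {1..m} \<Longrightarrow> 1 \<le> (\<Sum>S\<in>{S\<in>I. i\<in>S}. w0 S)"
    using w0K unfolding K_def by auto
  define N where "N = card I"
  obtain h where h: "bij_betw h {0..<N} I" using ex_bij_betw_nat_finite[OF finI] unfolding N_def by blast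
  have hI: "h j \<in> I" if "j < N" for j using h that by (auto dest: bij_betw_apply)
  define Ms where "Ms j = h j" for j
  define \<gamma> where "\<gamma> j = w0 (h j)" for j
  have minj: "\<forall>j<N. minimal_partial_clique_set m A (Ms j)"
    using hI unfolding Ms_def I_def by auto
  have cost: "fpcc_cost A N Ms \<gamma> = c w0"
  proof -
    have "fpcc_cost A N Ms \<gamma> = (\<Sum>j\<in>{0..<N}. w0 (h j) * beta_MDS A (h j))"
      unfolding fpcc_cost_def Ms_def \<gamma>_def by (simp add: lessThan_atLeast0)
    also have "\<dots> = c w0" unfolding c_def
      by (rule sum.reindex_bij_betw[OF h, of "\<lambda>S. w0 S * beta_MDS A S"])
    finally show ?thesis .
  qed
  have feas: "fpcc_feasible m N Ms \<gamma>"
    unfolding fpcc_feasible_def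
  proof (intro conjI allI impI ballI)
    fix j assume j: "j < N"
    have "minimal_partial_clique_set m A (Ms j)" using minj j by blast
    then show "Ms j \<noteq> {}" "Ms j \<subseteq> {1..m}" unfolding minimal_partial_clique_set_def by auto
    have "w0 (h j) \<in> {0..1}" using w0r[of "h j"] hI[OF j] by simp
    then show "0 \<le> \<gamma> j" "\<gamma> j \<le> 1" unfolding \<gamma>_def by auto
  next
    fix i :: nat assume i: "i \<in> {1..m}"
    have "(\<Sum>j\<in>{j. j < N \<and> i \<in> Ms j}. \<gamma> j) = (\<Sum>j\<in>{0..<N}. if i \<in> h j then w0 (h j) else 0)"
    proof -
      have "{j. j < N \<and> i \<in> Ms j} = {j\<in>{0..<N}. i \<in> h j}" unfolding Ms_def by auto
      then show ?thesis unfolding \<gamma>_def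
        using sum.inter_filter[of "{0..<N}" "\<lambda>j. w0 (h j)" "\<lambda>j. i \<in> h j"] by simp
    qed
    also have "\<dots> = (\<Sum>S\<in>I. if i \<in> S then w0 S else 0)"
      by (rule sum.reindex_bij_betw[OF h, of "\<lambda>S. if i \<in> S then w0 S else 0"])
    also have "\<dots> = (\<Sum>S\<in>{S\<in>I. i\<in>S}. w0 S)"
      by (rule sum.inter_filter[OF finI, symmetric])
    finally show "1 \<le> (\<Sum>j\<in>{j. j < N \<and> i \<in> Ms j}. \<gamma> j)" using w0c[OF i] by simp
  qed
  have lb: "fpcc_cost A N Ms \<gamma> \<le> fpcc_cost A n' Ms' \<gamma>'" if f': "fpcc_feasible m n' Ms' \<gamma>'" for n' Ms' \<gamma>'
  proof -
    obtain w where w: "w \<in> K" "c w \<le> fpcc_cost A n' Ms' \<gamma>'"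
      using lower[OF I_def f'] unfolding K_def c_def by blast
    show ?thesis using w0min[OF w(1)] w(2) cost by simp
  qed
  have "beta_FPCC m A = fpcc_cost A N Ms \<gamma>"
    unfolding beta_FPCC_def
  proof (rule cInf_eq_minimum)
    show "fpcc_cost A N Ms \<gamma> \<in> {fpcc_cost A n Ms \<gamma> |n Ms \<gamma>. fpcc_feasible m n Ms \<gamma>}"
      using feas by blast
  next
    fix x assume "x \<in> {fpcc_cost A n Ms \<gamma> |n Ms \<gamma>. fpcc_feasible m n Ms \<gamma>}"
    then show "fpcc_cost A N Ms \<gamma> \<le> x" using lb by blast
  qed
  then show ?thesis using feas minj lb by metis
qed

end
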